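(* Let $d\ge1$ and let $\Lambda_1,\dots,\Lambda_d\subset\mathbb{N}$ be arbitrary infinite lacunary sets. Then there exists a function $\psi=(\psi_i)_{1\le i\le d}\in H^2(\mathbb{D},\mathbb{C}^d)$, cyclic for $S^*$, such that $\sigma(\psi_i)=\Lambda_i$ for $1\le i\le d$.
   Context: $H^2(\mathbb{D},\mathbb{C}^d)=H^2\oplus\dots\oplus H^2$ with coordinate functions $\psi_i\in H^2$; $S^*$ acts coordinatewise as the scalar backward shift; $\psi$ is cyclic if the closed span of $\{S^{*n}\psi:n\ge0\}$ is all of $H^2(\mathbb{D},\mathbb{C}^d)$. $\sigma(g)=\{k:\hat g(k)\ne0\}$. A set $\{n_1<n_2<\dots\}$ is lacunary if $n_{k+1}/n_k\ge c>1$ for all $k$. *)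

theory Defs
  imports "HOL-Analysis.Analysis"
begin

text \<open>H^2 of the disc, identified (via Taylor coefficients) with square-summable
  complex sequences: g(z) = sum_n g n * z^n.\<close>
definition H2 :: "(nat \<Rightarrow> complex) \<Rightarrow> bool" where
  "H2 g \<longleftrightarrow> summable (\<lambda>n. (cmod (g n))\<^sup>2)"

definition H2vec :: "nat \<Rightarrow> (nat \<Rightarrow> nat \<Rightarrow> complex) \<Rightarrow> bool" where
  "H2vec d \<psi> \<longleftrightarrow> (\<forall>i<d. H2 (\<psi> i))"

definition bshift :: "(nat \<Rightarrow> complex) \<Rightarrow> (nat \<Rightarrow> complex)" where
  "bshift g = (\<lambda>m. g (Suc m))"

definition H2vec_normsq :: "nat \<Rightarrow> (nat \<Rightarrow> nat \<Rightarrow> complex) \<Rightarrow> real" where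
  "H2vec_normsq d f = (\<Sum>i<d. \<Sum>m. (cmod (f i m))\<^sup>2)"

definition Sstar_cyclic :: "nat \<Rightarrow> (nat \<Rightarrow> nat \<Rightarrow> complex) \<Rightarrow> bool" where
  "Sstar_cyclic d \<psi> \<longleftrightarrow>
     (\<forall>f. H2vec d f \<longrightarrow> (\<forall>\<epsilon>>0. \<exists>N (c :: nat \<Rightarrow> complex).
        H2vec_normsq d (\<lambda>i. \<lambda>m. f i m - (\<Sum>k<N. c k * (bshift ^^ k) (\<psi> i) m)) < \<epsilon>))"

definition spec :: "(nat \<Rightarrow> complex) \<Rightarrow> nat set" where
  "spec g = {k. g k \<noteq> 0}"

definition lacunary :: "nat set \<Rightarrow> bool" where
  "lacunary \<Lambda> \<longleftrightarrow>
     (\<exists>c::real. c > 1 \<and> (\<forall>k. real (enumerate \<Lambda> (Suc k)) / real (enumerate \<Lambda> k) \<ge> c))"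

end

theory Submission
  imports Defs
begin

lemma bshift_pow: "(bshift ^^ k) g m = g (m + k)"
  by (induction k arbitrary: m) (simp_all add: bshift_def)

definition comb :: "(nat \<Rightarrow> nat \<Rightarrow> complex) \<Rightarrow> nat \<Rightarrow> (nat \<Rightarrow> complex) \<Rightarrow> nat \<Rightarrow> nat \<Rightarrow> complex" where
  "comb \<psi> N c = (\<lambda>i m. \<Sum>k<N. c k * \<psi> i (m + k))"

definition appr :: "nat \<Rightarrow> (nat \<Rightarrow> nat \<Rightarrow> complex) \<Rightarrow> (nat \<Rightarrow> nat \<Rightarrow> complex) \<Rightarrow> bool" where
  "appr d \<psi> x \<longleftrightarrow> (\<forall>\<epsilon>>0. \<exists>N c. H2vec_normsq d (\<lambda>i m. x i m - comb \<psi> N c i m) < \<epsilon>)"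

lemma cyclic_iff: "Sstar_cyclic d \<psi> \<longleftrightarrow> (\<forall>f. H2vec d f \<longrightarrow> appr d \<psi> f)"
  unfolding Sstar_cyclic_def appr_def comb_def bshift_pow by simp

lemma nsq_bound:
  assumes "\<And>i m. i < d \<Longrightarrow> (cmod (x i m))\<^sup>2 \<le> b i m"
    and "\<And>i. i < d \<Longrightarrow> summable (b i)"
  shows "H2vec d x" "H2vec_normsq d x \<le> (\<Sum>i<d. suminf (b i))"
proof -
  have s: "summable (\<lambda>m. (cmod (x i m))\<^sup>2)" if "i < d" for i
    by (rule summable_comparison_test'[OF assms(2)[OF that], of 0]) (use assms(1) that in auto)
  then show "H2vec d x" unfolding H2vec_def H2_def by auto
  show "H2vec_normsq d x \<le> (\<Sum>i<d. suminf (b i))"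
    unfolding H2vec_normsq_def
    by (rule sum_mono, rule suminf_le) (use assms s in auto)
qed

lemma nsq_cong: "(\<And>i m. i < d \<Longrightarrow> x i m = y i m) \<Longrightarrow> H2vec_normsq d x = H2vec_normsq d y"
  unfolding H2vec_normsq_def by auto

lemma H2vec_cong: "(\<And>i m. i < d \<Longrightarrow> x i m = y i m) \<Longrightarrow> H2vec d x = H2vec d y"
  unfolding H2vec_def H2_def by auto

lemma appr_cong: assumes "(\<And>i m. i < d \<Longrightarrow> x i m = y i m)" shows "appr d \<psi> x = appr d \<psi> y"
proof -
  have "\<And>N c. H2vec_normsq d (\<lambda>i m. x i m - comb \<psi> N c i m) = H2vec_normsq d (\<lambda>i m. y i m - comb \<psi> N c i m)"
    by (rule nsq_cong) (simp add: assms)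
  then show ?thesis unfolding appr_def by simp
qed

lemma nsq_nonneg: "H2vec d x \<Longrightarrow> H2vec_normsq d x \<ge> 0"
  unfolding H2vec_normsq_def H2vec_def H2_def by (auto intro!: sum_nonneg suminf_nonneg)

lemma sq_add_le: "(cmod (a + b))\<^sup>2 \<le> 2 * (cmod a)\<^sup>2 + 2 * (cmod b)\<^sup>2"
proof -
  have "cmod (a + b) \<le> cmod a + cmod b" by (rule norm_triangle_ineq)
  hence "(cmod (a + b))\<^sup>2 \<le> (cmod a + cmod b)\<^sup>2" by (simp add: power_mono)
  also have "\<dots> \<le> 2 * (cmod a)\<^sup>2 + 2 * (cmod b)\<^sup>2"
  proof -
    have "0 \<le> (cmod a - cmod b)\<^sup>2" by simp
    then show ?thesis unfolding power2_sum power2_diff by linarith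
  qed
  finally show ?thesis .
qed

lemma nsq_add:
  assumes "H2vec d x" "H2vec d y"
  shows "H2vec d (\<lambda>i m. x i m + y i m)"
    "H2vec_normsq d (\<lambda>i m. x i m + y i m) \<le> 2 * H2vec_normsq d x + 2 * H2vec_normsq d y"
proof -
  let ?b = "\<lambda>i m. 2 * (cmod (x i m))\<^sup>2 + 2 * (cmod (y i m))\<^sup>2"
  have s: "summable (?b i)" if "i < d" for i
    using assms that unfolding H2vec_def H2_def by (auto intro!: summable_add summable_mult)
  have b: "(cmod (x i m + y i m))\<^sup>2 \<le> ?b i m" for i m by (rule sq_add_le)
  show "H2vec d (\<lambda>i m. x i m + y i m)" by (rule nsq_bound(1)[OF b s])
  have "H2vec_normsq d (\<lambda>i m. x i m + y i m) \<le> (\<Sum>i<d. suminf (?b i))" by (rule nsq_bound(2)[OF b s])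
  also have "\<dots> = (\<Sum>i<d. 2 * (\<Sum>m. (cmod (x i m))\<^sup>2) + 2 * (\<Sum>m. (cmod (y i m))\<^sup>2))"
    using assms unfolding H2vec_def H2_def
  proof (intro sum.cong refl)
    fix i assume "i \<in> {..<d}"
    then have a: "summable (\<lambda>m. (cmod (x i m))\<^sup>2)" "summable (\<lambda>m. (cmod (y i m))\<^sup>2)"
      using assms unfolding H2vec_def H2_def by auto
    have "suminf (?b i) = (\<Sum>m. 2 * (cmod (x i m))\<^sup>2) + (\<Sum>m. 2 * (cmod (y i m))\<^sup>2)"
      by (rule suminf_add[symmetric]) (use a in \<open>auto intro: summable_mult\<close>)
    also have "\<dots> = 2 * (\<Sum>m. (cmod (x i m))\<^sup>2) + 2 * (\<Sum>m. (cmod (y i m))\<^sup>2)"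
      using a by (simp add: suminf_mult)
    finally show "suminf (?b i) = 2 * (\<Sum>m. (cmod (x i m))\<^sup>2) + 2 * (\<Sum>m. (cmod (y i m))\<^sup>2)" .
  qed
  also have "\<dots> = 2 * H2vec_normsq d x + 2 * H2vec_normsq d y"
    unfolding H2vec_normsq_def by (simp add: sum.distrib sum_distrib_left)
  finally show "H2vec_normsq d (\<lambda>i m. x i m + y i m) \<le> 2 * H2vec_normsq d x + 2 * H2vec_normsq d y" .
qed

lemma nsq_scale:
  assumes "H2vec d x"
  shows "H2vec d (\<lambda>i m. a * x i m)" "H2vec_normsq d (\<lambda>i m. a * x i m) = (cmod a)\<^sup>2 * H2vec_normsq d x"
proof -
  show "H2vec d (\<lambda>i m. a * x i m)" using assms unfolding H2vec_def H2_def
    by (auto simp: norm_mult power_mult_distrib intro!: summable_mult)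
  show "H2vec_normsq d (\<lambda>i m. a * x i m) = (cmod a)\<^sup>2 * H2vec_normsq d x"
    using assms unfolding H2vec_normsq_def H2vec_def H2_def
    by (simp add: norm_mult power_mult_distrib suminf_mult sum_distrib_left)
qed

lemma H2vec_shift: "H2vec d x \<Longrightarrow> H2vec d (\<lambda>i m. x i (m + s))"
  unfolding H2vec_def H2_def by (auto simp: summable_iff_shift[where f="\<lambda>m. (cmod (x _ m))\<^sup>2"])

lemma H2vec_sum: "(\<And>k. k \<in> A \<Longrightarrow> H2vec d (x k)) \<Longrightarrow> H2vec d (\<lambda>i m. \<Sum>k\<in>A. x k i m)"
proof (induction A rule: infinite_finite_induct)
  case (infinite A) then show ?case by (simp add: H2vec_def H2_def)
next
  case empty then show ?case by (simp add: H2vec_def H2_def)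
next
  case (insert a A)
  then show ?case using nsq_add(1)[of d "x a" "\<lambda>i m. \<Sum>k\<in>A. x k i m"] by simp
qed

lemma H2vec_comb: "H2vec d \<psi> \<Longrightarrow> H2vec d (comb \<psi> N c)"
  unfolding comb_def
  by (rule H2vec_sum[where x="\<lambda>k i m. c k * \<psi> i (m + k)"]) (rule nsq_scale(1), rule H2vec_shift)

lemma sum_if_less: "N1 \<le> N \<Longrightarrow> (\<Sum>k<N. if k < N1 then f k else 0) = (\<Sum>k<(N1::nat). f k)"
  by (induction N) (auto simp: less_Suc_eq_le le_Suc_eq)

lemma comb_add: "comb \<psi> N1 c1 i m + comb \<psi> N2 c2 i m =
  comb \<psi> (N1 + N2) (\<lambda>k. (if k < N1 then c1 k else 0) + (if k < N2 then c2 k else 0)) i m"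
proof -
  have "comb \<psi> (N1 + N2) (\<lambda>k. (if k < N1 then c1 k else 0) + (if k < N2 then c2 k else 0)) i m
     = (\<Sum>k<N1+N2. if k < N1 then c1 k * \<psi> i (m + k) else 0) + (\<Sum>k<N1+N2. if k < N2 then c2 k * \<psi> i (m + k) else 0)"
  proof -
    have "\<And>k. ((if k < N1 then c1 k else 0) + (if k < N2 then c2 k else 0)) * \<psi> i (m + k)
       = (if k < N1 then c1 k * \<psi> i (m + k) else 0) + (if k < N2 then c2 k * \<psi> i (m + k) else 0)"
      by (simp add: distrib_right)
    then show ?thesis unfolding comb_def by (simp add: sum.distrib)
  qed
  also have "\<dots> = comb \<psi> N1 c1 i m + comb \<psi> N2 c2 i m"
    unfolding comb_def by (simp add: sum_if_less)
  finally show ?thesis by simp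
qed

context
  fixes d :: nat and \<psi> :: "nat \<Rightarrow> nat \<Rightarrow> complex"
  assumes psi: "H2vec d \<psi>"
begin

lemma A0: "appr d \<psi> (\<lambda>i m. 0)"
  unfolding appr_def by (auto intro!: exI[of _ 0] simp: comb_def H2vec_normsq_def)

lemma A_add:
  assumes "H2vec d x" "H2vec d y" "appr d \<psi> x" "appr d \<psi> y"
  shows "appr d \<psi> (\<lambda>i m. x i m + y i m)"
  unfolding appr_def
proof (intro allI impI)
  fix \<epsilon> :: real assume e: "\<epsilon> > 0"
  obtain N1 c1 where 1: "H2vec_normsq d (\<lambda>i m. x i m - comb \<psi> N1 c1 i m) < \<epsilon>/4"
    using assms(3) e unfolding appr_def by (meson zero_less_divide_iff zero_less_numeral)
  obtain N2 c2 where 2: "H2vec_normsq d (\<lambda>i m. y i m - comb \<psi> N2 c2 i m) < \<epsilon>/4"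
    using assms(4) e unfolding appr_def by (meson zero_less_divide_iff zero_less_numeral)
  let ?c = "\<lambda>k. (if k < N1 then c1 k else 0) + (if k < N2 then c2 k else 0)"
  have h1: "H2vec d (\<lambda>i m. x i m - comb \<psi> N1 c1 i m)"
    using nsq_add(1)[OF assms(1) nsq_scale(1)[OF H2vec_comb[OF psi], of "-1"]] by simp
  have h2: "H2vec d (\<lambda>i m. y i m - comb \<psi> N2 c2 i m)"
    using nsq_add(1)[OF assms(2) nsq_scale(1)[OF H2vec_comb[OF psi], of "-1"]] by simp
  have "H2vec_normsq d (\<lambda>i m. x i m + y i m - comb \<psi> (N1+N2) ?c i m)
      = H2vec_normsq d (\<lambda>i m. (x i m - comb \<psi> N1 c1 i m) + (y i m - comb \<psi> N2 c2 i m))"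
    by (rule nsq_cong) (simp add: comb_add[symmetric])
  also have "\<dots> \<le> 2 * H2vec_normsq d (\<lambda>i m. x i m - comb \<psi> N1 c1 i m) + 2 * H2vec_normsq d (\<lambda>i m. y i m - comb \<psi> N2 c2 i m)"
    by (rule nsq_add(2)[OF h1 h2])
  also have "\<dots> < \<epsilon>" using 1 2 by simp
  finally show "\<exists>N c. H2vec_normsq d (\<lambda>i m. x i m + y i m - comb \<psi> N c i m) < \<epsilon>" by blast
qed

lemma A_scale:
  assumes "H2vec d x" "appr d \<psi> x"
  shows "appr d \<psi> (\<lambda>i m. a * x i m)"
  unfolding appr_def
proof (intro allI impI)
  fix \<epsilon> :: real assume e: "\<epsilon> > 0"
  have "(cmod a)\<^sup>2 + 1 > 0" by (metis add_nonneg_pos zero_le_power2 zero_less_one)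
  then have "\<epsilon> / ((cmod a)\<^sup>2 + 1) > 0" using e by simp
  then obtain N c where 1: "H2vec_normsq d (\<lambda>i m. x i m - comb \<psi> N c i m) < \<epsilon> / ((cmod a)\<^sup>2 + 1)"
    using assms(2) unfolding appr_def by blast
  have h1: "H2vec d (\<lambda>i m. x i m - comb \<psi> N c i m)"
    using nsq_add(1)[OF assms(1) nsq_scale(1)[OF H2vec_comb[OF psi], of "-1"]] by simp
  have "H2vec_normsq d (\<lambda>i m. a * x i m - comb \<psi> N (\<lambda>k. a * c k) i m)
     = H2vec_normsq d (\<lambda>i m. a * (x i m - comb \<psi> N c i m))"
    by (rule nsq_cong) (simp add: comb_def sum_distrib_left algebra_simps)
  also have "\<dots> = (cmod a)\<^sup>2 * H2vec_normsq d (\<lambda>i m. x i m - comb \<psi> N c i m)"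
    by (rule nsq_scale(2)[OF h1])
  also have "\<dots> \<le> (cmod a)\<^sup>2 * (\<epsilon> / ((cmod a)\<^sup>2 + 1))"
    using 1 by (intro mult_left_mono) auto
  also have "\<dots> < \<epsilon>" using e
    using \<open>(cmod a)\<^sup>2 + 1 > 0\<close> by (simp add: field_simps)
  finally show "\<exists>N c. H2vec_normsq d (\<lambda>i m. a * x i m - comb \<psi> N c i m) < \<epsilon>" by blast
qed

lemma A_lim:
  assumes "H2vec d x"
    and "\<And>\<epsilon>. \<epsilon> > 0 \<Longrightarrow> \<exists>y. H2vec d y \<and> appr d \<psi> y \<and> H2vec_normsq d (\<lambda>i m. x i m - y i m) < \<epsilon>"
  shows "appr d \<psi> x"
  unfolding appr_def
proof (intro allI impI)
  fix \<epsilon> :: real assume e: "\<epsilon> > 0"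
  obtain y where y: "H2vec d y" "appr d \<psi> y" "H2vec_normsq d (\<lambda>i m. x i m - y i m) < \<epsilon>/4"
    using assms(2)[of "\<epsilon>/4"] e by auto
  obtain N c where 1: "H2vec_normsq d (\<lambda>i m. y i m - comb \<psi> N c i m) < \<epsilon>/4"
    using y(2) e unfolding appr_def by (meson zero_less_divide_iff zero_less_numeral)
  have h1: "H2vec d (\<lambda>i m. y i m - comb \<psi> N c i m)"
    using nsq_add(1)[OF y(1) nsq_scale(1)[OF H2vec_comb[OF psi], of "-1"]] by simp
  have h2: "H2vec d (\<lambda>i m. x i m - y i m)"
    using nsq_add(1)[OF assms(1) nsq_scale(1)[OF y(1), of "-1"]] by simp
  have "H2vec_normsq d (\<lambda>i m. x i m - comb \<psi> N c i m)
      = H2vec_normsq d (\<lambda>i m. (x i m - y i m) + (y i m - comb \<psi> N c i m))"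
    by (rule nsq_cong) simp
  also have "\<dots> \<le> 2 * H2vec_normsq d (\<lambda>i m. x i m - y i m) + 2 * H2vec_normsq d (\<lambda>i m. y i m - comb \<psi> N c i m)"
    by (rule nsq_add(2)[OF h2 h1])
  also have "\<dots> < \<epsilon>" using 1 y(3) by simp
  finally show "\<exists>N c. H2vec_normsq d (\<lambda>i m. x i m - comb \<psi> N c i m) < \<epsilon>" by blast
qed

lemma nsq_shift1: "H2vec d z \<Longrightarrow> H2vec_normsq d (\<lambda>i m. z i (Suc m)) \<le> H2vec_normsq d z"
  unfolding H2vec_normsq_def H2vec_def H2_def
  by (intro sum_mono) (subst suminf_split_head, auto)

lemma A_shift1:
  assumes "H2vec d x" "appr d \<psi> x"
  shows "appr d \<psi> (\<lambda>i m. x i (Suc m))"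
  unfolding appr_def
proof (intro allI impI)
  fix \<epsilon> :: real assume e: "\<epsilon> > 0"
  obtain N c where 1: "H2vec_normsq d (\<lambda>i m. x i m - comb \<psi> N c i m) < \<epsilon>"
    using assms(2) e unfolding appr_def by blast
  have h1: "H2vec d (\<lambda>i m. x i m - comb \<psi> N c i m)"
    using nsq_add(1)[OF assms(1) nsq_scale(1)[OF H2vec_comb[OF psi], of "-1"]] by simp
  let ?c = "\<lambda>k. if k = 0 then 0 else c (k - 1)"
  have eq: "comb \<psi> (Suc N) ?c i m = comb \<psi> N c i (Suc m)" for i m
    unfolding comb_def sum.lessThan_Suc_shift by simp
  have "H2vec_normsq d (\<lambda>i m. x i (Suc m) - comb \<psi> (Suc N) ?c i m)
      = H2vec_normsq d (\<lambda>i m. (\<lambda>i m. x i m - comb \<psi> N c i m) i (Suc m))"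
    by (rule nsq_cong) (simp add: eq)
  also have "\<dots> \<le> H2vec_normsq d (\<lambda>i m. x i m - comb \<psi> N c i m)"
    by (rule nsq_shift1[OF h1])
  finally show "\<exists>N c. H2vec_normsq d (\<lambda>i m. x i (Suc m) - comb \<psi> N c i m) < \<epsilon>" using 1
    by (meson le_less_trans)
qed

lemma A_shift:
  assumes "H2vec d x" "appr d \<psi> x"
  shows "appr d \<psi> (\<lambda>i m. x i (m + s))"
proof (induction s)
  case 0 then show ?case using assms by simp
next
  case (Suc s)
  have "appr d \<psi> (\<lambda>i m. (\<lambda>i m. x i (m + s)) i (Suc m))"
    by (rule A_shift1[OF H2vec_shift[OF assms(1)] Suc])
  then show ?case by simp
qed

end

lemma half_pow_ratio:
  assumes "A + B \<le> (C::nat)"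
  shows "((1/2::real)^C) / ((1/2)^A) \<le> (1/2)^B"
proof -
  have "(1/2::real)^C = (1/2)^A * (1/2)^(C - A)" using assms by (simp add: power_add[symmetric])
  moreover have "(1/2::real)^(C - A) \<le> (1/2)^B" using assms by (intro power_decreasing) auto
  ultimately show ?thesis by simp
qed

lemma ineq_a:
  fixes u m p L j :: nat
  assumes "p < m" "L \<le> u" "p \<le> u"
  shows "2*(j+1)*u\<^sup>2 + L + m \<le> 2*(j+1)*(m + (u - p))\<^sup>2"
proof -
  define n where "n = m + (u - p)"
  have n1: "u + 1 \<le> n" "m \<le> n" using assms unfolding n_def by auto
  have "n * (u + 1) \<le> n * n" using n1 by (intro mult_le_mono2) auto
  moreover have "(u + 1) * u \<le> n * u" using n1 by (intro mult_le_mono1) auto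
  ultimately have "u*u + u + n \<le> n*n" by (simp add: algebra_simps)
  then have "2*(j+1)*(u*u + u + n) \<le> 2*(j+1)*(n*n)" by (intro mult_le_mono2)
  then have "2*(j+1)*(u*u) + (u + n) \<le> 2*(j+1)*(n*n)" by (simp add: algebra_simps)
  then show ?thesis using n1 assms unfolding n_def[symmetric] power2_eq_square by linarith
qed

lemma ineq_b:
  fixes v m p L j i :: nat
  assumes "j < i" "2*(j+1)*(2*p+p*p) + L + 1 \<le> v"
  shows "2*(j+1)*(v+p)\<^sup>2 + L + m \<le> 2*(i+1)*(m+v)\<^sup>2"
proof -
  define A where "A = 2*(j+1)*(2*p+p*p) + L + 1"
  have v1: "1 \<le> v" using assms unfolding A_def by simp
  have "A * v \<le> v * v" using assms unfolding A_def by (intro mult_le_mono1) auto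
  moreover have "2*(j+1)*(2*p * v+p*p) + L \<le> A * v"
  proof -
    have h1: "2*p * v+p*p \<le> 2*p * v+p*p * v" using v1 by simp
    have h2: "2*(j+1)*(2*p * v+p*p) \<le> 2*(j+1)*(2*p * v+p*p * v)" by (rule mult_le_mono2[OF h1])
    have h3: "L \<le> L * v" using v1 by simp
    have "A * v = 2*(j+1)*(2*p * v+p*p * v) + L * v + v" unfolding A_def by (simp add: algebra_simps)
    then show ?thesis using h2 h3 by linarith
  qed
  ultimately have key: "2*(j+1)*(2*p * v+p*p) + L \<le> v * v" by linarith
  have sq: "v * v + m \<le> (m+v)*(m+v)"
  proof -
    have "m \<le> m * v" using v1 by simp
    moreover have "(m+v)*(m+v) = v * v + m*m + 2*(m * v)" by (simp add: algebra_simps)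
    ultimately show ?thesis by linarith
  qed
  have "2*(j+1)*(v+p)\<^sup>2 + L + m = 2*(j+1)*(v * v) + (2*(j+1)*(2*p * v+p*p) + L) + m"
    by (simp add: power2_eq_square algebra_simps)
  also have "\<dots> \<le> 2*(j+1)*(v * v) + v * v + m" using key by simp
  also have "\<dots> \<le> 2*(j+1)*(v * v) + 2*(v * v + m)" by simp
  also have "\<dots> \<le> 2*(j+1)*((m+v)*(m+v)) + 2*((m+v)*(m+v))"
    using sq by (intro add_mono mult_le_mono2) (auto intro: mult_le_mono)
  also have "\<dots> = 2*(j+2)*(m+v)\<^sup>2" by (simp add: power2_eq_square algebra_simps)
  also have "\<dots> \<le> 2*(i+1)*(m+v)\<^sup>2" using assms(1) by (intro mult_le_mono1) auto
  finally show ?thesis .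
qed

definition W :: "nat \<Rightarrow> nat \<Rightarrow> real" where
  "W j n = (1/2)^((j+1)*n\<^sup>2)"

definition psiL :: "(nat \<Rightarrow> nat set) \<Rightarrow> nat \<Rightarrow> nat \<Rightarrow> complex" where
  "psiL \<Lambda> j n = (if n \<in> \<Lambda> j then complex_of_real (W j n) else 0)"

lemma W_pos: "W j n > 0" unfolding W_def by simp

lemma W_sq: "(W j n)\<^sup>2 = (1/2)^(2*(j+1)*n\<^sup>2)"
proof -
  have "((1/2::real)^((j+1)*n\<^sup>2))\<^sup>2 = (1/2)^((j+1)*n\<^sup>2*2)" by (rule power_mult[symmetric])
  also have "(j+1)*n\<^sup>2*2 = 2*(j+1)*n\<^sup>2" by simp
  finally show ?thesis by (simp add: W_def)
qed

lemma psi_sq_le: "P \<le> m \<Longrightarrow> (cmod (psiL \<Lambda> j m))\<^sup>2 \<le> (1/2)^(P + m)"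
proof -
  assume "P \<le> m"
  have "P + m \<le> 2*(j+1)*m\<^sup>2"
  proof -
    have "m \<le> m*m" by (cases m) auto
    then have "P + m \<le> 2*(m*m)" using \<open>P \<le> m\<close> by linarith
    also have "\<dots> \<le> 2*(j+1)*(m*m)" by simp
    finally show ?thesis by (simp add: power2_eq_square)
  qed
  then have "(W j m)\<^sup>2 \<le> (1/2)^(P + m)" unfolding W_sq by (intro power_decreasing) auto
  then show ?thesis unfolding psiL_def using W_pos[of j m] by auto
qed

lemma psi_sq_le0: "(cmod (psiL \<Lambda> j m))\<^sup>2 \<le> (1/2)^m"
  using psi_sq_le[of 0 m] by simp

lemma summable_half: "summable (\<lambda>m. c * (1/2::real)^m)"
  by (intro summable_mult summable_geometric) simp

lemma suminf_half: "(\<Sum>m. c * (1/2::real)^m) = 2 * c"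
  by (subst suminf_mult) (simp_all add: suminf_geometric)

lemma H2vec_psiL: "H2vec d (psiL \<Lambda>)"
  using nsq_bound(1)[of d "psiL \<Lambda>" "\<lambda>i m. 1 * (1/2)^m"] psi_sq_le0 summable_half by auto

lemma W_ne: "W j n \<noteq> 0" using W_pos[of j n] by linarith

lemma spec_psiL: "spec (psiL \<Lambda> j) = \<Lambda> j"
  unfolding spec_def psiL_def using W_ne by auto

definition Psi :: "(nat \<Rightarrow> nat set) \<Rightarrow> nat \<Rightarrow> nat \<Rightarrow> nat \<Rightarrow> complex" where
  "Psi \<Lambda> j = (\<lambda>i m. if i < j then 0 else psiL \<Lambda> i m)"

definition E :: "nat \<Rightarrow> nat \<Rightarrow> nat \<Rightarrow> nat \<Rightarrow> complex" where
  "E j p = (\<lambda>i m. if i = j \<and> m = p then 1 else 0)"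

lemma H2vec_Psi: "H2vec d (Psi \<Lambda> j)"
  using nsq_bound(1)[of d "Psi \<Lambda> j" "\<lambda>i m. 1 * (1/2)^m"] psi_sq_le0 summable_half
  unfolding Psi_def by auto

lemma H2vec_E: "H2vec d (E j p)"
proof (rule nsq_bound(1)[of d _ "\<lambda>i m. 2^p * (1/2)^m"])
  fix i m show "(cmod (E j p i m))\<^sup>2 \<le> 2^p * (1/2::real)^m"
    unfolding E_def by (auto simp: power_one_over)
qed (rule summable_half)

lemma gap_enum:
  fixes S :: "nat set"
  assumes "infinite S" "n \<in> S" "n < enumerate S (Suc k)"
  shows "n \<le> enumerate S k"
proof -
  obtain q where q: "enumerate S q = n" using enumerate_Ex[OF assms(1,2)] by blast
  have "enumerate S q < enumerate S (Suc k)" using q assms(3) by simp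
  then have "q < Suc k" using enumerate_mono_iff[OF assms(1)] by simp
  then show ?thesis using q assms(1) by (metis less_Suc_eq_le enumerate_mono_le_iff)
qed

lemma ratio_bound:
  assumes "2*(j+1)*u\<^sup>2 + (L + m) \<le> 2*(i+1)*n\<^sup>2"
  shows "(cmod (complex_of_real (1 / W j u) * complex_of_real (W i n)))\<^sup>2 \<le> (1/2)^L * (1/2::real)^m"
proof -
  have "cmod (complex_of_real (1 / W j u) * complex_of_real (W i n)) = W i n / W j u"
    using W_pos[of j u] W_pos[of i n] by (simp add: norm_divide)
  then have "(cmod (complex_of_real (1 / W j u) * complex_of_real (W i n)))\<^sup>2 = (W i n)\<^sup>2 / (W j u)\<^sup>2"
    by (simp add: power_divide)
  also have "\<dots> = (1/2)^(2*(i+1)*n\<^sup>2) / (1/2)^(2*(j+1)*u\<^sup>2)" unfolding W_sq ..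
  also have "\<dots> \<le> (1/2)^(L + m)" by (rule half_pow_ratio[OF assms])
  also have "\<dots> = (1/2)^L * (1/2::real)^m" by (simp add: power_add)
  finally show ?thesis .
qed

lemma pw:
  assumes u: "u \<in> \<Lambda> j" and gap: "\<And>n. n \<in> \<Lambda> j \<Longrightarrow> n < u \<Longrightarrow> n + p < u"
    and big: "p + (2*(j+1)*(2*p+p*p) + L + 1) \<le> u"
  shows "(cmod (E j p i m - complex_of_real (1 / W j u) * Psi \<Lambda> j i (m + (u - p))))\<^sup>2
          \<le> (1/2)^L * (1/2::real)^m"
proof -
  define n where "n = m + (u - p)"
  have nonneg: "0 \<le> (1/2)^L * (1/2::real)^m" by simp
  consider "i < j" | "i = j \<and> m = p" | "i = j \<and> m < p" | "(i = j \<and> p < m) \<or> j < i"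
    by linarith
  then show ?thesis
  proof cases
    case 1 then show ?thesis unfolding E_def Psi_def by simp
  next
    case 2
    then have "n = u" using big unfolding n_def by simp
    then show ?thesis using 2 u W_ne[of j u] unfolding E_def Psi_def psiL_def n_def[symmetric] by simp
  next
    case 3
    then have "n \<notin> \<Lambda> j" using gap big unfolding n_def by force
    then show ?thesis using 3 unfolding E_def Psi_def psiL_def n_def[symmetric] by simp
  next
    case 4
    have ineq: "2*(j+1)*u\<^sup>2 + (L + m) \<le> 2*(i+1)*n\<^sup>2"
    proof (cases "j < i")
      case True
      have "2*(j+1)*((u - p)+p)\<^sup>2 + L + m \<le> 2*(i+1)*(m+(u - p))\<^sup>2"
        by (rule ineq_b[OF True]) (use big in linarith)
      then show ?thesis using big unfolding n_def by simp
    next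
      case False
      then have "i = j" "p < m" using 4 by auto
      have "2*(j+1)*u\<^sup>2 + L + m \<le> 2*(j+1)*(m + (u - p))\<^sup>2"
        by (rule ineq_a) (use big \<open>p < m\<close> in linarith)+
      then show ?thesis using \<open>i = j\<close> unfolding n_def by simp
    qed
    have ne: "\<not> (i = j \<and> m = p)" using 4 by auto
    have nl: "\<not> i < j" using 4 by auto
    show ?thesis
    proof (cases "n \<in> \<Lambda> i")
      case True
      have "E j p i m - complex_of_real (1 / W j u) * Psi \<Lambda> j i (m + (u - p))
          = - (complex_of_real (1 / W j u) * complex_of_real (W i n))"
        using ne nl True unfolding E_def Psi_def psiL_def n_def by simp
      then show ?thesis using ratio_bound[OF ineq] by (simp only: norm_minus_cancel)
    next
      case False
      then show ?thesis using ne nl unfolding E_def Psi_def psiL_def n_def by auto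
    qed
  qed
qed

lemma key:
  assumes jd: "j < d" and inf: "infinite (\<Lambda> j)" and lac: "lacunary (\<Lambda> j)"
    and sh: "\<And>s. appr d (psiL \<Lambda>) (\<lambda>i m. Psi \<Lambda> j i (m + s))"
  shows "appr d (psiL \<Lambda>) (E j p)"
proof (rule A_lim[OF H2vec_psiL H2vec_E])
  fix \<epsilon> :: real assume e: "\<epsilon> > 0"
  have "\<epsilon> / (2 * real d + 1) > 0" using e by simp
  then obtain L where L: "(1/2::real)^L < \<epsilon> / (2 * real d + 1)"
    using real_arch_pow_inv[of "\<epsilon> / (2 * real d + 1)" "1/2"] by auto
  obtain c where c: "c > 1" "\<And>k. real (enumerate (\<Lambda> j) (Suc k)) / real (enumerate (\<Lambda> j) k) \<ge> c"
    using lac unfolding lacunary_def by auto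
  define A where "A = 2*(j+1)*(2*p+p*p) + L + 1"
  define K where "K = real p * c / (c - 1) + real p + real A"
  define k where "k = nat \<lceil>K\<rceil>"
  define u where "u = enumerate (\<Lambda> j) (Suc k)"
  have uin: "u \<in> \<Lambda> j" unfolding u_def by (rule enumerate_in_set[OF inf])
  have "Suc k \<le> u" unfolding u_def by (rule le_enumerate[OF inf])
  moreover have "K \<le> real k" unfolding k_def by (rule real_nat_ceiling_ge)
  ultimately have uK: "real u > K" by linarith
  have pc0: "real p * c / (c - 1) \<ge> 0" using c by simp
  have big: "p + A \<le> u" using uK pc0 unfolding K_def by linarith
  have ekpos: "real (enumerate (\<Lambda> j) k) > 0"
  proof (rule ccontr)
    assume "\<not> ?thesis"
    then have "real (enumerate (\<Lambda> j) k) = 0" by simp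
    then show False using c(2)[of k] c(1) by simp
  qed
  have ek: "real (enumerate (\<Lambda> j) k) * c \<le> real u"
    using c(2)[of k] ekpos unfolding u_def by (simp add: pos_le_divide_eq mult.commute)
  have "real p * c / (c - 1) < real u" using uK pc0 unfolding K_def by linarith
  then have puc: "real p * c < real u * (c - 1)" using c(1) by (simp add: pos_divide_less_eq)
  have gap: "n + p < u" if "n \<in> \<Lambda> j" "n < u" for n
  proof -
    have "n \<le> enumerate (\<Lambda> j) k" using gap_enum[OF inf that(1)] that(2) unfolding u_def by blast
    then have "real n * c \<le> real (enumerate (\<Lambda> j) k) * c" using c(1) by simp
    then have "(real n + real p) * c < real u * c" using ek puc by (simp add: algebra_simps)
    then have "real n + real p < real u" using c(1) by simp
    then show ?thesis by linarith
  qed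
  define y where "y = (\<lambda>i m. complex_of_real (1 / W j u) * Psi \<Lambda> j i (m + (u - p)))"
  have Hy: "H2vec d y" unfolding y_def by (rule nsq_scale(1)[OF H2vec_shift[OF H2vec_Psi]])
  have ay: "appr d (psiL \<Lambda>) y" unfolding y_def
    by (rule A_scale[OF H2vec_psiL H2vec_shift[OF H2vec_Psi] sh])
  have "H2vec_normsq d (\<lambda>i m. E j p i m - y i m) \<le> (\<Sum>i<d. \<Sum>m. (1/2)^L * (1/2::real)^m)"
  proof (rule nsq_bound(2))
    fix i m
    show "(cmod (E j p i m - y i m))\<^sup>2 \<le> (1/2)^L * (1/2::real)^m"
      unfolding y_def by (rule pw[of u \<Lambda> j p L, OF uin gap]) (use big in \<open>auto simp: A_def\<close>)
  qed (rule summable_half)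
  also have "\<dots> = real d * (2 * (1/2)^L)" by (simp add: suminf_half)
  also have "\<dots> \<le> (2 * real d + 1) * (1/2)^L" by simp
  also have "\<dots> < \<epsilon>" using L by (simp add: pos_less_divide_eq mult.commute)
  finally show "\<exists>y. H2vec d y \<and> appr d (psiL \<Lambda>) y \<and> H2vec_normsq d (\<lambda>i m. E j p i m - y i m) < \<epsilon>"
    using Hy ay by blast
qed

lemma small_pow:
  assumes "\<epsilon> > (0::real)"
  obtains P where "real d * (2 * (1/2::real)^P) < \<epsilon>"
proof -
  have "\<epsilon> / (2 * real d + 1) > 0" using assms by simp
  then obtain P where L: "(1/2::real)^P < \<epsilon> / (2 * real d + 1)"
    using real_arch_pow_inv[of "\<epsilon> / (2 * real d + 1)" "1/2"] by auto
  have "real d * (2 * (1/2::real)^P) \<le> (2 * real d + 1) * (1/2)^P" by simp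
  also have "\<dots> < \<epsilon>" using L by (simp add: pos_less_divide_eq mult.commute)
  finally show ?thesis using that by blast
qed

lemma step:
  assumes jd: "j < d" and inf: "infinite (\<Lambda> j)" and lac: "lacunary (\<Lambda> j)"
    and a: "appr d (psiL \<Lambda>) (Psi \<Lambda> j)"
  shows "appr d (psiL \<Lambda>) (Psi \<Lambda> (Suc j))"
proof -
  have sh: "appr d (psiL \<Lambda>) (\<lambda>i m. Psi \<Lambda> j i (m + s))" for s
    by (rule A_shift[OF H2vec_psiL H2vec_Psi a])
  have Ep: "appr d (psiL \<Lambda>) (E j p)" for p by (rule key[OF jd inf lac sh])
  define G where "G P = (\<lambda>i m. if i = j \<and> m < P then psiL \<Lambda> j m else 0)" for P
  have HG: "H2vec d (G P)" for P
    by (rule nsq_bound(1)[of d _ "\<lambda>i m. 1 * (1/2)^m"]) (auto simp: G_def psi_sq_le0 summable_half)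
  have aG: "appr d (psiL \<Lambda>) (G P)" for P
  proof (induction P)
    case 0
    have "appr d (psiL \<Lambda>) (G 0) = appr d (psiL \<Lambda>) (\<lambda>i m. 0)" by (rule appr_cong) (simp add: G_def)
    then show ?case using A0[OF H2vec_psiL] by simp
  next
    case (Suc P)
    have "appr d (psiL \<Lambda>) (\<lambda>i m. G P i m + psiL \<Lambda> j P * E j P i m)"
      by (rule A_add[OF H2vec_psiL HG nsq_scale(1)[OF H2vec_E] Suc A_scale[OF H2vec_psiL H2vec_E Ep]])
    moreover have "appr d (psiL \<Lambda>) (G (Suc P)) = appr d (psiL \<Lambda>) (\<lambda>i m. G P i m + psiL \<Lambda> j P * E j P i m)"
      by (rule appr_cong) (auto simp: G_def E_def)
    ultimately show ?case by simp
  qed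
  show ?thesis
  proof (rule A_lim[OF H2vec_psiL H2vec_Psi])
    fix \<epsilon> :: real assume e: "\<epsilon> > 0"
    obtain P where P: "real d * (2 * (1/2::real)^P) < \<epsilon>" using small_pow[OF e] by blast
    define y where "y = (\<lambda>i m. Psi \<Lambda> j i m + (-1) * G P i m)"
    have Hy: "H2vec d y" unfolding y_def by (rule nsq_add(1)[OF H2vec_Psi nsq_scale(1)[OF HG]])
    have ay: "appr d (psiL \<Lambda>) y" unfolding y_def
      by (rule A_add[OF H2vec_psiL H2vec_Psi nsq_scale(1)[OF HG] a A_scale[OF H2vec_psiL HG aG]])
    have "H2vec_normsq d (\<lambda>i m. Psi \<Lambda> (Suc j) i m - y i m) \<le> (\<Sum>i<d. \<Sum>m. (1/2)^P * (1/2::real)^m)"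
    proof (rule nsq_bound(2))
      fix i m
      show "(cmod (Psi \<Lambda> (Suc j) i m - y i m))\<^sup>2 \<le> (1/2)^P * (1/2::real)^m"
      proof (cases "i = j \<and> P \<le> m")
        case True
        then have "Psi \<Lambda> (Suc j) i m - y i m = - psiL \<Lambda> j m"
          unfolding y_def Psi_def G_def by auto
        then show ?thesis using psi_sq_le[of P m \<Lambda> j] True by (simp add: power_add)
      next
        case False
        then have "Psi \<Lambda> (Suc j) i m - y i m = 0"
          unfolding y_def Psi_def G_def by auto
        then show ?thesis by simp
      qed
    qed (rule summable_half)
    also have "\<dots> = real d * (2 * (1/2)^P)" by (simp add: suminf_half)
    finally show "\<exists>y. H2vec d y \<and> appr d (psiL \<Lambda>) y \<and> H2vec_normsq d (\<lambda>i m. Psi \<Lambda> (Suc j) i m - y i m) < \<epsilon>"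
      using Hy ay P by (meson le_less_trans)
  qed
qed

lemma tail_small:
  fixes h :: "nat \<Rightarrow> real"
  assumes "summable h" "\<epsilon> > 0"
  shows "\<exists>P. summable (\<lambda>m. if P \<le> m then h m else 0) \<and> (\<Sum>m. if P \<le> m then h m else 0) < \<epsilon>"
proof -
  obtain P where P: "norm ((\<Sum>i<P. h i) - suminf h) < \<epsilon>"
    using LIMSEQ_D[OF summable_LIMSEQ[OF assms(1)] assms(2)] by blast
  define g where "g = (\<lambda>m. if P \<le> m then h m else 0)"
  have gs: "(\<lambda>n. g (n + P)) = (\<lambda>n. h (n + P))" unfolding g_def by auto
  have sg: "summable g"
    using assms(1) summable_iff_shift[of g P] summable_iff_shift[of h P] gs by simp
  have "suminf g = (\<Sum>n. g (n + P)) + (\<Sum>i<P. g i)" by (rule suminf_split_initial_segment[OF sg])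
  also have "\<dots> = (\<Sum>n. h (n + P))" using gs by (simp add: g_def)
  also have "\<dots> = suminf h - (\<Sum>i<P. h i)" by (rule suminf_minus_initial_segment[OF assms(1)])
  finally have "suminf g < \<epsilon>" using P by simp
  then show ?thesis using sg unfolding g_def by blast
qed

lemma approx_all:
  assumes E: "\<And>j p. j < d \<Longrightarrow> appr d \<psi> (E j p)" and psi: "H2vec d \<psi>" and f: "H2vec d f"
  shows "appr d \<psi> f"
proof -
  have fs: "summable (\<lambda>m. (cmod (f i m))\<^sup>2)" if "i < d" for i using f that unfolding H2vec_def H2_def by auto
  define T where "T i0 P = (\<lambda>i m. if i = i0 \<and> m < P then f i m else 0)" for i0 P
  have HT: "H2vec d (T i0 P)" for i0 P
    by (rule nsq_bound(1)[of d _ "\<lambda>i m. (cmod (f i m))\<^sup>2"]) (auto simp: T_def fs)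
  have aT: "appr d \<psi> (T i0 P)" if "i0 < d" for i0 P
  proof (induction P)
    case 0
    have "appr d \<psi> (T i0 0) = appr d \<psi> (\<lambda>i m. 0)" by (rule appr_cong) (simp add: T_def)
    then show ?case using A0[OF psi] by simp
  next
    case (Suc P)
    have "appr d \<psi> (\<lambda>i m. T i0 P i m + f i0 P * E i0 P i m)"
      by (rule A_add[OF psi HT nsq_scale(1)[OF H2vec_E] Suc A_scale[OF psi H2vec_E E[OF that]]])
    moreover have "appr d \<psi> (T i0 (Suc P)) = appr d \<psi> (\<lambda>i m. T i0 P i m + f i0 P * E i0 P i m)"
      by (rule appr_cong) (auto simp: T_def E_def)
    ultimately show ?case by simp
  qed
  define F where "F i0 = (\<lambda>i m. if i = i0 then f i m else 0)" for i0
  have HF: "H2vec d (F i0)" for i0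
    by (rule nsq_bound(1)[of d _ "\<lambda>i m. (cmod (f i m))\<^sup>2"]) (auto simp: F_def fs)
  have aF: "appr d \<psi> (F i0)" if i0: "i0 < d" for i0
  proof (rule A_lim[OF psi HF])
    fix \<epsilon> :: real assume e: "\<epsilon> > 0"
    obtain P where P: "summable (\<lambda>m. if P \<le> m then (cmod (f i0 m))\<^sup>2 else 0)"
        "(\<Sum>m. if P \<le> m then (cmod (f i0 m))\<^sup>2 else 0) < \<epsilon>"
      using tail_small[OF fs[OF i0] e] by blast
    define b where "b = (\<lambda>i m. if i = i0 then (if P \<le> m then (cmod (f i0 m))\<^sup>2 else 0) else 0)"
    have "H2vec_normsq d (\<lambda>i m. F i0 i m - T i0 P i m) \<le> (\<Sum>i<d. suminf (b i))"
    proof (rule nsq_bound(2))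
      fix i m show "(cmod (F i0 i m - T i0 P i m))\<^sup>2 \<le> b i m"
        unfolding F_def T_def b_def by auto
    next
      fix i show "summable (b i)" unfolding b_def using P(1) by (cases "i = i0") auto
    qed
    also have "\<dots> = (\<Sum>i<d. if i = i0 then (\<Sum>m. if P \<le> m then (cmod (f i0 m))\<^sup>2 else 0) else 0)"
      by (intro sum.cong refl) (simp add: b_def)
    also have "\<dots> = (\<Sum>m. if P \<le> m then (cmod (f i0 m))\<^sup>2 else 0)" using i0 by simp
    finally show "\<exists>y. H2vec d y \<and> appr d \<psi> y \<and> H2vec_normsq d (\<lambda>i m. F i0 i m - y i m) < \<epsilon>"
      using HT aT[OF i0] P(2) by (meson le_less_trans)
  qed
  define S where "S K = (\<lambda>i m. if i < K then f i m else 0)" for K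
  have HS: "H2vec d (S K)" for K
    by (rule nsq_bound(1)[of d _ "\<lambda>i m. (cmod (f i m))\<^sup>2"]) (auto simp: S_def fs)
  have aS: "K \<le> d \<Longrightarrow> appr d \<psi> (S K)" for K
  proof (induction K)
    case 0
    have "appr d \<psi> (S 0) = appr d \<psi> (\<lambda>i m. 0)" by (rule appr_cong) (simp add: S_def)
    then show ?case using A0[OF psi] by simp
  next
    case (Suc K)
    have "appr d \<psi> (\<lambda>i m. S K i m + F K i m)"
      by (rule A_add[OF psi HS HF]) (use Suc in \<open>auto intro: aF\<close>)
    moreover have "appr d \<psi> (S (Suc K)) = appr d \<psi> (\<lambda>i m. S K i m + F K i m)"
      by (rule appr_cong) (auto simp: S_def F_def)
    ultimately show ?case by simp
  qed
  have "appr d \<psi> f = appr d \<psi> (S d)" by (rule appr_cong) (simp add: S_def)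
  then show ?thesis using aS[of d] by simp
qed

theorem mainTheorem11:
  fixes d :: nat and \<Lambda> :: "nat \<Rightarrow> nat set"
  assumes "d \<ge> 1"
    and "\<And>i. i < d \<Longrightarrow> infinite (\<Lambda> i)"
    and "\<And>i. i < d \<Longrightarrow> lacunary (\<Lambda> i)"
  shows "\<exists>\<psi>. H2vec d \<psi> \<and> Sstar_cyclic d \<psi> \<and> (\<forall>i<d. spec (\<psi> i) = \<Lambda> i)"
proof (intro exI conjI allI impI)
  show "H2vec d (psiL \<Lambda>)" by (rule H2vec_psiL)
  show "spec (psiL \<Lambda> i) = \<Lambda> i" for i by (rule spec_psiL)
  have a0: "appr d (psiL \<Lambda>) (Psi \<Lambda> 0)"
    unfolding appr_def
  proof (intro allI impI exI)
    fix \<epsilon> :: real assume "\<epsilon> > 0"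
    have "H2vec_normsq d (\<lambda>i m. Psi \<Lambda> 0 i m - comb (psiL \<Lambda>) 1 (\<lambda>k. 1) i m) = H2vec_normsq d (\<lambda>i m. 0)"
      by (rule nsq_cong) (simp add: Psi_def comb_def)
    then show "H2vec_normsq d (\<lambda>i m. Psi \<Lambda> 0 i m - comb (psiL \<Lambda>) 1 (\<lambda>k. 1) i m) < \<epsilon>"
      using \<open>\<epsilon> > 0\<close> by (simp add: H2vec_normsq_def)
  qed
  have aj: "j \<le> d \<Longrightarrow> appr d (psiL \<Lambda>) (Psi \<Lambda> j)" for j
  proof (induction j)
    case 0 show ?case by (rule a0)
  next
    case (Suc j)
    then show ?case using step[of j d \<Lambda>] assms by simp
  qed
  have E: "appr d (psiL \<Lambda>) (E j p)" if "j < d" for j p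
  proof (rule key[of j d \<Lambda>])
    show "appr d (psiL \<Lambda>) (\<lambda>i m. Psi \<Lambda> j i (m + s))" for s
      by (rule A_shift[OF H2vec_psiL H2vec_Psi aj]) (use that in simp)
  qed (use that assms in auto)
  show "Sstar_cyclic d (psiL \<Lambda>)"
    unfolding cyclic_iff using approx_all[OF E H2vec_psiL] by blast
qed

end
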